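(* Let $r\ge2$ and $n\ge2$. For $0<b<r^n$, the lattice point of the half-open parallelepiped of $\mathcal{B}_{(r,n)}$ indexed by $b$ lies in the open parallelepiped if and only if $r\nmid b$. Consequently \[ \ell^\ast(\mathcal{B}_{(r,n)};z)=h^\ast(\mathcal{B}_{(r,n)};z)-h^\ast(\mathcal{B}_{(r,n-1)};z). \]
   Context: For $r\ge2$, $n\ge1$, let $q^{(r,n)}:=((r-1),(r-1)r,\ldots,(r-1)r^{n-1})$ and $\mathcal{B}_{(r,n)}:=\operatorname{conv}\bigl(e^{(1)},\ldots,e^{(n)},-\sum_{i=1}^n(r-1)r^{i-1}e^{(i)}\bigr)\subset\mathbb{R}^n$ (the base-$r$ $n$-simplex; its normalized volume is $r^n$). Ordering its vertices as $v^{(0)}=-\sum_i (r-1)r^{i-1}e^{(i)}$, $v^{(i)}=e^{(i)}$, the lattice points of the half-open parallelepiped $\{\sum_{i=0}^n\lambda_i(v^{(i)},1):0\le\lambda_i<1\}$ are in bijection with $0\le b<r^n$ via $\lambda_0=b/r^n$. For a lattice simplex $\Delta=\operatorname{conv}(v^{(0)},\ldots,v^{(d)})$, $\ell^\ast(\Delta;z):=\sum_{x\in\Pi^\circ_\Delta\cap\mathbb{Z}^{n+1}}z^{x_{n+1}}$ with $\Pi^\circ_\Delta:=\{\sum\lambda_i(v^{(i)},1):0<\lambda_i<1\}$, and $h^\ast(P;z)$ is the numerator of the Ehrhart series $\sum_{t\ge0}|tP\cap\mathbb{Z}^n|z^t=h^\ast(P;z)/(1-z)^{\dim P+1}$. 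*)

theory Defs
  imports Complex_Main "HOL-Computational_Algebra.Formal_Power_Series"
begin

(* Points of R^m are represented as functions nat => real, coordinate j (0-based)
   for j < m, all other coordinates 0.  A lattice simplex with d+1 vertices in R^n
   is given by V :: nat => (nat => real), vertices V 0, ..., V d. *)

(* Vertices of the base-r n-simplex B_(r,n):
   vertex 0 = - sum_i (r-1) r^(i-1) e^(i), vertex i = e^(i) (1 <= i <= n);
   e^(i) has its 1 in (0-based) coordinate i-1. *)
definition base_vert :: "nat \<Rightarrow> nat \<Rightarrow> nat \<Rightarrow> nat \<Rightarrow> real" where
  "base_vert r n i j =
     (if i = 0 then (if j < n then - ((real r - 1) * real r ^ j) else 0)
      else (if i \<le> n \<and> j = i - 1 then 1 else 0))"

(* (v,1) in R^(n+1): the extra coordinate is coordinate n *)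
definition lift_pt :: "nat \<Rightarrow> (nat \<Rightarrow> real) \<Rightarrow> nat \<Rightarrow> real" where
  "lift_pt n v = v(n := 1)"

definition par_point :: "nat \<Rightarrow> nat \<Rightarrow> (nat \<Rightarrow> nat \<Rightarrow> real) \<Rightarrow> (nat \<Rightarrow> real) \<Rightarrow> nat \<Rightarrow> real" where
  "par_point n d V lam = (\<lambda>j. \<Sum>i\<le>d. lam i * lift_pt n (V i) j)"

definition is_lattice_pt :: "(nat \<Rightarrow> real) \<Rightarrow> bool" where
  "is_lattice_pt x \<longleftrightarrow> (\<forall>j. x j \<in> \<int>)"

definition open_par :: "nat \<Rightarrow> nat \<Rightarrow> (nat \<Rightarrow> nat \<Rightarrow> real) \<Rightarrow> (nat \<Rightarrow> real) set" where
  "open_par n d V = {par_point n d V lam | lam. \<forall>i\<le>d. 0 < lam i \<and> lam i < 1}"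

definition lstar :: "nat \<Rightarrow> nat \<Rightarrow> (nat \<Rightarrow> nat \<Rightarrow> real) \<Rightarrow> int fps" where
  "lstar n d V = Abs_fps (\<lambda>k. int (card {x \<in> open_par n d V. is_lattice_pt x \<and> x n = real k}))"

definition ehrhart_count :: "nat \<Rightarrow> nat \<Rightarrow> (nat \<Rightarrow> nat \<Rightarrow> real) \<Rightarrow> nat \<Rightarrow> nat" where
  "ehrhart_count n d V t = card {x :: nat \<Rightarrow> int. (\<forall>j\<ge>n. x j = 0) \<and>
      (\<exists>mu :: nat \<Rightarrow> real. (\<forall>i\<le>d. 0 \<le> mu i) \<and> (\<Sum>i\<le>d. mu i) = real t \<and>
          (\<forall>j<n. real_of_int (x j) = (\<Sum>i\<le>d. mu i * V i j)))}"

(* h^*-polynomial of a d-dimensional lattice simplex conv(V 0..V d) (dim P = d):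
   the numerator  (sum_t |tP \<inter> Z^n| z^t) * (1 - z)^(d+1), as a formal power series *)
definition h_star :: "nat \<Rightarrow> nat \<Rightarrow> (nat \<Rightarrow> nat \<Rightarrow> real) \<Rightarrow> int fps" where
  "h_star n d V = Abs_fps (\<lambda>t. int (ehrhart_count n d V t)) * (1 - fps_X) ^ (d + 1)"

definition base_hp_points :: "nat \<Rightarrow> nat \<Rightarrow> nat \<Rightarrow> (nat \<Rightarrow> real) set" where
  "base_hp_points r n b = {y. is_lattice_pt y \<and>
     (\<exists>lam. lam 0 = real b / real r ^ n \<and> (\<forall>i\<le>n. 0 \<le> lam i \<and> lam i < 1) \<and>
            y = par_point n n (base_vert r n) lam)}"

end

theory Submission
  imports Defs
begin


lemma bv_sum:
  assumes "j < n"
  shows "(\<Sum>i\<le>n. mu i * base_vert r n i j) = mu (Suc j) - mu 0 * ((real r - 1) * real r ^ j)"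
proof -
  have "(\<Sum>i\<le>n. mu i * base_vert r n i j) = mu 0 * base_vert r n 0 j + (\<Sum>i<n. mu (Suc i) * base_vert r n (Suc i) j)"
    by (simp add: sum.atMost_shift)
  also have "(\<Sum>i<n. mu (Suc i) * base_vert r n (Suc i) j) = (\<Sum>i<n. if i = j then mu (Suc j) else 0)"
    by (rule sum.cong) (auto simp: base_vert_def)
  also have "\<dots> = mu (Suc j)" using assms by simp
  finally show ?thesis using assms by (simp add: base_vert_def)
qed

lemma bv_sum_ge:
  assumes "n \<le> j"
  shows "(\<Sum>i\<le>n. mu i * base_vert r n i j) = 0"
  using assms by (intro sum.neutral) (auto simp: base_vert_def)

lemma pp_lt: "j < n \<Longrightarrow> par_point n n (base_vert r n) lam j = lam (Suc j) - lam 0 * ((real r - 1) * real r ^ j)"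
  unfolding par_point_def lift_pt_def using bv_sum[of j n lam r] by simp

lemma pp_n: "par_point n n V lam n = (\<Sum>i\<le>n. lam i)"
  unfolding par_point_def lift_pt_def by simp

lemma pp_gt: "n < j \<Longrightarrow> par_point n n (base_vert r n) lam j = 0"
  unfolding par_point_def lift_pt_def using bv_sum_ge[of n j lam r] by simp

lemma geom: "(\<Sum>j<n. (real r - 1) * real r ^ j) = real r ^ n - 1"
  by (induction n) (auto simp: algebra_simps)

lemma sum_shift0: "(\<Sum>i\<le>n. (lam::nat\<Rightarrow>real) i) = lam 0 + (\<Sum>j<n. lam (Suc j))"
  by (simp add: sum.atMost_shift)



definition fl :: "nat \<Rightarrow> nat \<Rightarrow> nat \<Rightarrow> nat \<Rightarrow> nat" where
  "fl r n b j = (b * (r - 1) * r ^ j) div r ^ n"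
definition fr :: "nat \<Rightarrow> nat \<Rightarrow> nat \<Rightarrow> nat \<Rightarrow> nat" where
  "fr r n b j = (b * (r - 1) * r ^ j) mod r ^ n"
definition hh :: "nat \<Rightarrow> nat \<Rightarrow> nat \<Rightarrow> int" where
  "hh r n b = int b - (\<Sum>j<n. int (fl r n b j))"
definition lamb :: "nat \<Rightarrow> nat \<Rightarrow> nat \<Rightarrow> nat \<Rightarrow> real" where
  "lamb r n b i = (if i = 0 then real b / real r ^ n else real (fr r n b (i - 1)) / real r ^ n)"
definition PP :: "nat \<Rightarrow> nat \<Rightarrow> nat \<Rightarrow> nat \<Rightarrow> real" where
  "PP r n b = par_point n n (base_vert r n) (lamb r n b)"

lemma real_split:
  assumes "r \<ge> 1"
  shows "real b / real r ^ n * ((real r - 1) * real r ^ j) = real (fl r n b j) + real (fr r n b j) / real r ^ n"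
proof -
  have R: "real r ^ n > 0" using assms by simp
  have "b * (r - 1) * r ^ j = fl r n b j * r ^ n + fr r n b j"
    unfolding fl_def fr_def by (metis div_mult_mod_eq)
  hence e: "real (b * (r - 1) * r ^ j) = real (fl r n b j) * real r ^ n + real (fr r n b j)"
    by (simp only: of_nat_add of_nat_mult of_nat_power)
  have d: "real (r - 1) = real r - 1" using assms by auto
  have "real (b * (r - 1) * r ^ j) = real b * real (r - 1) * real r ^ j" by (simp only: of_nat_mult of_nat_power)
  hence "real b * (real r - 1) * real r ^ j = real (fl r n b j) * real r ^ n + real (fr r n b j)" using e d by simp
  thus ?thesis using R by (simp add: field_simps)
qed

lemma fr_lt: assumes "r \<ge> 1" shows "real (fr r n b j) / real r ^ n < 1"
proof -
  have "fr r n b j < r ^ n" unfolding fr_def using assms by simp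
  hence "real (fr r n b j) < real r ^ n" by (metis of_nat_less_iff of_nat_power)
  thus ?thesis using assms by simp
qed

lemma gen_inv:
  assumes "y = par_point n n (base_vert r n) lam"
  shows "y n - (\<Sum>j<n. y j) = lam 0 * real r ^ n"
proof -
  have "(\<Sum>j<n. y j) = (\<Sum>j<n. lam (Suc j) - lam 0 * ((real r - 1) * real r ^ j))"
    using assms pp_lt by (intro sum.cong) auto
  also have "\<dots> = (\<Sum>j<n. lam (Suc j)) - (\<Sum>j<n. lam 0 * ((real r - 1) * real r ^ j))"
    by (simp add: sum_subtractf)
  also have "(\<Sum>j<n. lam 0 * ((real r - 1) * real r ^ j)) = lam 0 * (real r ^ n - 1)"
    by (subst sum_distrib_left[symmetric]) (simp only: geom)
  finally have s1: "(\<Sum>j<n. y j) = (\<Sum>j<n. lam (Suc j)) - lam 0 * (real r ^ n - 1)" .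
  have s2: "y n = lam 0 + (\<Sum>j<n. lam (Suc j))" using assms pp_n[of n "base_vert r n" lam] sum_shift0[of lam n] by simp
  show ?thesis using s1 s2 by (simp add: algebra_simps)
qed

lemma inv_lam:
  assumes r: "r \<ge> 1" and y: "y = par_point n n (base_vert r n) lam"
    and l0: "lam 0 = real b / real r ^ n"
    and lr: "\<And>i. 1 \<le> i \<Longrightarrow> i \<le> n \<Longrightarrow> 0 \<le> lam i \<and> lam i < 1"
    and yi: "\<And>j. j < n \<Longrightarrow> y j \<in> \<int>"
    and j: "j < n"
  shows "lam (Suc j) = real (fr r n b j) / real r ^ n \<and> y j = - real (fl r n b j)"
proof -
  have e: "lam (Suc j) = y j + real (fl r n b j) + real (fr r n b j) / real r ^ n"
  proof -
    have a: "y j = lam (Suc j) - lam 0 * ((real r - 1) * real r ^ j)" using pp_lt[OF j, of r lam] y by simp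
    have b: "lam 0 * ((real r - 1) * real r ^ j) = real (fl r n b j) + real (fr r n b j) / real r ^ n"
      using real_split[OF r, of b n j] l0 by simp
    show ?thesis using a b by linarith
  qed
  obtain z where z: "y j = real_of_int z" using yi[OF j] Ints_cases by metis
  have f0: "0 \<le> real (fr r n b j) / real r ^ n" by simp
  have f1: "real (fr r n b j) / real r ^ n < 1" using fr_lt[OF r] .
  have "0 \<le> lam (Suc j)" "lam (Suc j) < 1" using lr[of "Suc j"] j by auto
  moreover have "real_of_int (z + int (fl r n b j)) = lam (Suc j) - real (fr r n b j) / real r ^ n"
    using e z by simp
  ultimately have "-1 < real_of_int (z + int (fl r n b j))" "real_of_int (z + int (fl r n b j)) < 1"
    using f0 f1 by linarith+
  hence "z + int (fl r n b j) = 0" by linarith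
  hence "z = - int (fl r n b j)" by linarith
  hence "real_of_int z = - real (fl r n b j)" by simp
  thus ?thesis using e z by simp
qed

lemma par_cong: "(\<And>i. i \<le> d \<Longrightarrow> lam i = lam' i) \<Longrightarrow> par_point n d V lam = par_point n d V lam'"
  unfolding par_point_def by (intro ext sum.cong) auto

lemma PP_coord_lt: "r \<ge> 1 \<Longrightarrow> j < n \<Longrightarrow> PP r n b j = - real (fl r n b j)"
  unfolding PP_def using pp_lt[of j n r "lamb r n b"] real_split[of r b n j] by (simp add: lamb_def)

lemma PP_coord_gt: "n < j \<Longrightarrow> PP r n b j = 0"
  unfolding PP_def using pp_gt by simp

lemma PP_gen: assumes "r \<ge> 1" shows "PP r n b n - (\<Sum>j<n. PP r n b j) = real b"
  using gen_inv[of "PP r n b" n r "lamb r n b"] assms unfolding PP_def by (simp add: lamb_def)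

lemma PP_n:
  assumes "r \<ge> 1" shows "PP r n b n = real_of_int (hh r n b)"
proof -
  have R: "real r ^ n > 0" using assms by simp
  have "PP r n b n = real b + (\<Sum>j<n. PP r n b j)" using PP_gen[OF assms, of n b] by simp
  also have "(\<Sum>j<n. PP r n b j) = (\<Sum>j<n. - real (fl r n b j))"
    using PP_coord_lt[OF assms] by simp
  finally show ?thesis unfolding hh_def by (simp add: sum_negf)
qed

lemma PP_lattice: "r \<ge> 1 \<Longrightarrow> is_lattice_pt (PP r n b)"
  unfolding is_lattice_pt_def
proof
  fix j assume r: "r \<ge> 1"
  show "PP r n b j \<in> \<int>"
  proof (cases "j < n")
    case True thus ?thesis using PP_coord_lt[OF r] by simp
  next
    case False
    show ?thesis
    proof (cases "j = n")
      case True thus ?thesis using PP_n[OF r] by simp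
    next
      case False thus ?thesis using \<open>\<not> j < n\<close> PP_coord_gt by simp
    qed
  qed
qed

lemma PP_in_hp:
  assumes "r \<ge> 1" "b < r ^ n"
  shows "PP r n b \<in> base_hp_points r n b"
  unfolding base_hp_points_def
proof (intro CollectI conjI exI)
  show "is_lattice_pt (PP r n b)" using PP_lattice assms by simp
  show "lamb r n b 0 = real b / real r ^ n" by (simp add: lamb_def)
  show "PP r n b = par_point n n (base_vert r n) (lamb r n b)" by (simp add: PP_def)
  have "real b < real r ^ n" using assms(2) by (metis of_nat_less_iff of_nat_power)
  moreover have R: "real r ^ n > 0" using assms by simp
  ultimately have "real b / real r ^ n < 1" by simp
  thus "\<forall>i\<le>n. 0 \<le> lamb r n b i \<and> lamb r n b i < 1"
    using fr_lt[OF assms(1)] unfolding lamb_def by simp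
qed

lemma hp_eq_PP:
  assumes r: "r \<ge> 1" and y: "y \<in> base_hp_points r n b"
  shows "y = PP r n b"
proof -
  obtain lam where L: "is_lattice_pt y" "lam 0 = real b / real r ^ n" "\<forall>i\<le>n. 0 \<le> lam i \<and> lam i < 1"
    "y = par_point n n (base_vert r n) lam" using y unfolding base_hp_points_def by blast
  have "\<And>i. i \<le> n \<Longrightarrow> lam i = lamb r n b i"
  proof -
    fix i assume i: "i \<le> n"
    show "lam i = lamb r n b i"
    proof (cases i)
      case 0 thus ?thesis using L by (simp add: lamb_def)
    next
      case (Suc j)
      have "lam (Suc j) = real (fr r n b j) / real r ^ n"
        using inv_lam[OF r L(4) L(2), of j] L(1,3) i Suc unfolding is_lattice_pt_def by auto
      thus ?thesis using Suc by (simp add: lamb_def)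
    qed
  qed
  thus ?thesis unfolding PP_def L(4) by (intro par_cong) auto
qed

lemma PP_open_iff:
  assumes r: "r \<ge> 1" and b: "b < r ^ n"
  shows "PP r n b \<in> open_par n n (base_vert r n) \<longleftrightarrow> (0 < b \<and> (\<forall>j<n. fr r n b j \<noteq> 0))"
proof
  assume "PP r n b \<in> open_par n n (base_vert r n)"
  then obtain lam where L: "\<forall>i\<le>n. 0 < lam i \<and> lam i < 1" "PP r n b = par_point n n (base_vert r n) lam"
    unfolding open_par_def by blast
  have R: "real r ^ n > 0" using r by simp
  have "lam 0 * real r ^ n = real b"
    using gen_inv[OF L(2)] PP_gen[OF r] by simp
  hence l0: "lam 0 = real b / real r ^ n" using R by (simp add: field_simps)
  have "real b / real r ^ n > 0" using L(1) l0 by auto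
  hence "0 < b" by (cases "b = 0") auto
  moreover have "\<forall>j<n. fr r n b j \<noteq> 0"
  proof (intro allI impI)
    fix j assume j: "j < n"
    have lr: "\<And>i. 1 \<le> i \<Longrightarrow> i \<le> n \<Longrightarrow> 0 \<le> lam i \<and> lam i < 1" using L(1) by (simp add: less_imp_le)
    have yi: "\<And>j. j < n \<Longrightarrow> PP r n b j \<in> \<int>" using PP_lattice[OF r] unfolding is_lattice_pt_def by blast
    have "lam (Suc j) = real (fr r n b j) / real r ^ n"
      using inv_lam[OF r L(2) l0 lr yi j] by blast
    moreover have "0 < lam (Suc j)" using L(1) j by auto
    ultimately show "fr r n b j \<noteq> 0" by (cases "fr r n b j = 0") auto
  qed
  ultimately show "0 < b \<and> (\<forall>j<n. fr r n b j \<noteq> 0)" by blast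
next
  assume A: "0 < b \<and> (\<forall>j<n. fr r n b j \<noteq> 0)"
  have "real b < real r ^ n" using b by (metis of_nat_less_iff of_nat_power)
  moreover have R: "real r ^ n > 0" using r by simp
  ultimately have "real b / real r ^ n < 1" by simp
  hence "\<forall>i\<le>n. 0 < lamb r n b i \<and> lamb r n b i < 1"
    using A fr_lt[OF r] R unfolding lamb_def by (auto simp del: of_nat_power)
  thus "PP r n b \<in> open_par n n (base_vert r n)" unfolding open_par_def PP_def by blast
qed

lemma fr_zero_iff:
  assumes r: "r \<ge> 2" and n: "n \<ge> 1"
  shows "(\<exists>j<n. fr r n b j = 0) \<longleftrightarrow> r dvd b"
proof
  assume "\<exists>j<n. fr r n b j = 0"
  then obtain j where j: "j < n" "r ^ n dvd b * (r - 1) * r ^ j" unfolding fr_def by auto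
  have "r ^ n = r ^ (n - j) * r ^ j" using j by (simp add: power_add[symmetric])
  hence "r ^ (n - j) * r ^ j dvd (b * (r - 1)) * r ^ j" using j by simp
  hence "r ^ (n - j) dvd b * (r - 1)" using r by simp
  hence "r dvd b * (r - 1)" using j by (metis dvd_power dvd_trans zero_less_diff)
  moreover have "coprime r (r - 1)"
  proof -
    obtain s where "r = Suc s" using r by (cases r) auto
    thus ?thesis by simp
  qed
  ultimately show "r dvd b" by (metis coprime_dvd_mult_left_iff)
next
  assume "r dvd b"
  then obtain c where bc: "b = r * c" by blast
  have pw: "r * r ^ (n - 1) = r ^ n" using n by (cases n) auto
  have "b * (r - 1) * r ^ (n - 1) = (r * c) * (r - 1) * r ^ (n - 1)" by (simp only: bc)
  also have "\<dots> = (r * r ^ (n - 1)) * (c * (r - 1))" by (simp only: mult_ac)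
  also have "\<dots> = r ^ n * (c * (r - 1))" by (simp only: pw)
  finally have eq: "b * (r - 1) * r ^ (n - 1) = r ^ n * (c * (r - 1))" .
  have "fr r n b (n - 1) = 0" unfolding fr_def eq by simp
  thus "\<exists>j<n. fr r n b j = 0" using n by (intro exI[of _ "n - 1"]) auto
qed



lemma hh_nonneg: "r \<ge> 1 \<Longrightarrow> 0 \<le> hh r n b"
proof -
  assume r: "r \<ge> 1"
  have "PP r n b n = (\<Sum>i\<le>n. lamb r n b i)" unfolding PP_def by (rule pp_n)
  also have "\<dots> \<ge> 0" by (intro sum_nonneg) (simp add: lamb_def)
  finally show ?thesis using PP_n[OF r, of n b] by simp
qed

lemma partA:
  assumes r: "r \<ge> 2" and n: "n \<ge> 1" and b: "0 < b" "b < r ^ n"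
  shows "base_hp_points r n b \<noteq> {} \<and>
            (\<forall>y \<in> base_hp_points r n b. (y \<in> open_par n n (base_vert r n) \<longleftrightarrow> \<not> r dvd b))"
proof -
  have r1: "r \<ge> 1" using r by simp
  have A: "PP r n b \<in> open_par n n (base_vert r n) \<longleftrightarrow> (\<forall>j<n. fr r n b j \<noteq> 0)"
    using PP_open_iff[OF r1 b(2)] b(1) by simp
  have B: "(\<forall>j<n. fr r n b j \<noteq> 0) \<longleftrightarrow> \<not> r dvd b"
    using fr_zero_iff[OF r n, of b] by meson
  show ?thesis
  proof
    show "base_hp_points r n b \<noteq> {}" using PP_in_hp[OF r1 b(2)] by blast
    show "\<forall>y \<in> base_hp_points r n b. (y \<in> open_par n n (base_vert r n) \<longleftrightarrow> \<not> r dvd b)"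
    proof
      fix y assume "y \<in> base_hp_points r n b"
      hence "y = PP r n b" using hp_eq_PP[OF r1] by blast
      thus "y \<in> open_par n n (base_vert r n) \<longleftrightarrow> \<not> r dvd b" using A B by simp
    qed
  qed
qed

lemma PP_inj_on:
  assumes r: "r \<ge> 1" shows "inj (PP r n)"
proof (rule injI)
  fix a b assume e: "PP r n a = PP r n b"
  have "real a = PP r n a n - (\<Sum>j<n. PP r n a j)" using PP_gen[OF r, of n a] by simp
  also have "\<dots> = PP r n b n - (\<Sum>j<n. PP r n b j)" by (simp only: e)
  also have "\<dots> = real b" using PP_gen[OF r, of n b] by simp
  finally show "a = b" by simp
qed

lemma open_set_eq:
  assumes r: "r \<ge> 2" and n: "n \<ge> 1"
  shows "{x \<in> open_par n n (base_vert r n). is_lattice_pt x \<and> x n = real k}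
     = PP r n ` {b. b < r ^ n \<and> \<not> r dvd b \<and> hh r n b = int k}"
proof
  have r1: "r \<ge> 1" using r by simp
  have R: "real r ^ n > 0" using r by simp
  show "{x \<in> open_par n n (base_vert r n). is_lattice_pt x \<and> x n = real k}
     \<subseteq> PP r n ` {b. b < r ^ n \<and> \<not> r dvd b \<and> hh r n b = int k}"
  proof
    fix x assume "x \<in> {x \<in> open_par n n (base_vert r n). is_lattice_pt x \<and> x n = real k}"
    hence xo: "x \<in> open_par n n (base_vert r n)" and xl: "is_lattice_pt x" and xk: "x n = real k" by auto
    obtain lam where L: "\<forall>i\<le>n. 0 < lam i \<and> lam i < 1" "x = par_point n n (base_vert r n) lam"
      using xo unfolding open_par_def by blast
    have g: "x n - (\<Sum>j<n. x j) = lam 0 * real r ^ n" using gen_inv[OF L(2)] .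
    have "x n - (\<Sum>j<n. x j) \<in> \<int>" using xl unfolding is_lattice_pt_def
      by (intro Ints_diff Ints_sum) auto
    then obtain z where z0: "x n - (\<Sum>j<n. x j) = real_of_int z" using Ints_cases by metis
    have z: "real_of_int z = lam 0 * real r ^ n" using z0 g by simp
    have "0 < lam 0" "lam 0 < 1" using L(1) by auto
    hence z1: "0 < real_of_int z" "real_of_int z < real r ^ n" using z R by auto
    define b where "b = nat z"
    have zb: "real_of_int z = real b" using z1 unfolding b_def by simp
    have bR: "b < r ^ n" using z1 zb by (metis of_nat_less_iff of_nat_power)
    have l0: "lam 0 = real b / real r ^ n" using z zb R by (simp add: field_simps)
    have lr: "\<forall>i\<le>n. 0 \<le> lam i \<and> lam i < 1" using L(1) by (simp add: less_imp_le)
    have "x \<in> base_hp_points r n b" unfolding base_hp_points_def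
      using xl l0 lr L(2) by blast
    hence xe: "x = PP r n b" using hp_eq_PP[OF r1] by blast
    hence "\<forall>j<n. fr r n b j \<noteq> 0" using xo PP_open_iff[OF r1 bR] by simp
    hence "\<not> r dvd b" using fr_zero_iff[OF r n, of b] by meson
    moreover have "hh r n b = int k" using xk xe PP_n[OF r1, of n b] by simp
    ultimately show "x \<in> PP r n ` {b. b < r ^ n \<and> \<not> r dvd b \<and> hh r n b = int k}"
      using xe bR by blast
  qed
  show "PP r n ` {b. b < r ^ n \<and> \<not> r dvd b \<and> hh r n b = int k}
     \<subseteq> {x \<in> open_par n n (base_vert r n). is_lattice_pt x \<and> x n = real k}"
  proof
    fix x assume "x \<in> PP r n ` {b. b < r ^ n \<and> \<not> r dvd b \<and> hh r n b = int k}"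
    then obtain b where b: "b < r ^ n" "\<not> r dvd b" "hh r n b = int k" "x = PP r n b" by blast
    have "0 < b" using b(2) by (cases b) auto
    moreover have "\<forall>j<n. fr r n b j \<noteq> 0" using fr_zero_iff[OF r n, of b] b(2) by simp
    ultimately have "x \<in> open_par n n (base_vert r n)"
      using PP_open_iff[OF r1 b(1)] b(4) by simp
    moreover have "is_lattice_pt x" using PP_lattice[OF r1] b(4) by simp
    moreover have "x n = real k" using PP_n[OF r1, of n b] b(3,4) by simp
    ultimately show "x \<in> {x \<in> open_par n n (base_vert r n). is_lattice_pt x \<and> x n = real k}" by blast
  qed
qed

lemma lstar_coeff:
  assumes r: "r \<ge> 2" and n: "n \<ge> 1"
  shows "fps_nth (lstar n n (base_vert r n)) k = int (card {b. b < r ^ n \<and> \<not> r dvd b \<and> hh r n b = int k})"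
proof -
  have "inj_on (PP r n) {b. b < r ^ n \<and> \<not> r dvd b \<and> hh r n b = int k}"
    using PP_inj_on[of r n] r by (meson inj_on_subset subset_UNIV one_le_numeral order_trans)
  thus ?thesis unfolding lstar_def using open_set_eq[OF r n, of k] by (simp add: card_image)
qed



definition mm :: "nat \<Rightarrow> nat \<Rightarrow> (nat \<Rightarrow> int) \<Rightarrow> int" where
  "mm n t x = int t - (\<Sum>j<n. x j)"

definition ES :: "nat \<Rightarrow> nat \<Rightarrow> nat \<Rightarrow> (nat \<Rightarrow> int) set" where
  "ES r n t = {x :: nat \<Rightarrow> int. (\<forall>j\<ge>n. x j = 0) \<and>
      (\<exists>mu :: nat \<Rightarrow> real. (\<forall>i\<le>n. 0 \<le> mu i) \<and> (\<Sum>i\<le>n. mu i) = real t \<and>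
          (\<forall>j<n. real_of_int (x j) = (\<Sum>i\<le>n. mu i * base_vert r n i j)))}"

definition QS :: "nat \<Rightarrow> nat \<Rightarrow> nat \<Rightarrow> (nat \<Rightarrow> int) set" where
  "QS r n t = {x. (\<forall>j\<ge>n. x j = 0) \<and> 0 \<le> mm n t x \<and>
      (\<forall>j<n. 0 \<le> int r ^ n * x j + mm n t x * (int r - 1) * int r ^ j)}"

lemma ehr_ES: "ehrhart_count n n (base_vert r n) t = card (ES r n t)"
  unfolding ehrhart_count_def ES_def by simp

lemma ES_QS_1:
  assumes r: "r \<ge> 1" and x: "x \<in> ES r n t"
  shows "x \<in> QS r n t"
proof -
  obtain mu where M: "\<forall>j\<ge>n. x j = 0" "\<forall>i\<le>n. 0 \<le> mu i" "(\<Sum>i\<le>n. mu i) = real t"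
    "\<forall>j<n. real_of_int (x j) = (\<Sum>i\<le>n. mu i * base_vert r n i j)"
    using x unfolding ES_def by blast
  have R: "real r ^ n > 0" using r by simp
  have cx: "\<And>j. j < n \<Longrightarrow> real_of_int (x j) = mu (Suc j) - mu 0 * ((real r - 1) * real r ^ j)"
    using M(4) bv_sum by simp
  have "(\<Sum>j<n. real_of_int (x j)) = (\<Sum>j<n. mu (Suc j) - mu 0 * ((real r - 1) * real r ^ j))"
    using cx by simp
  also have "\<dots> = (\<Sum>j<n. mu (Suc j)) - (\<Sum>j<n. mu 0 * ((real r - 1) * real r ^ j))"
    by (simp add: sum_subtractf)
  also have "(\<Sum>j<n. mu 0 * ((real r - 1) * real r ^ j)) = mu 0 * (real r ^ n - 1)"
    by (subst sum_distrib_left[symmetric]) (simp only: geom)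
  finally have s1: "(\<Sum>j<n. real_of_int (x j)) = (\<Sum>j<n. mu (Suc j)) - mu 0 * (real r ^ n - 1)" .
  have s2: "real t = mu 0 + (\<Sum>j<n. mu (Suc j))" using M(3) sum_shift0[of mu n] by simp
  have mmr: "real_of_int (mm n t x) = mu 0 * real r ^ n"
    unfolding mm_def using s1 s2 by (simp add: algebra_simps)
  have "0 \<le> mu 0 * real r ^ n" using M(2) R by simp
  hence m0: "0 \<le> mm n t x" using mmr by linarith
  have "\<forall>j<n. 0 \<le> int r ^ n * x j + mm n t x * (int r - 1) * int r ^ j"
  proof (intro allI impI)
    fix j assume j: "j < n"
    have "real_of_int (int r ^ n * x j + mm n t x * (int r - 1) * int r ^ j)
        = real r ^ n * real_of_int (x j) + real_of_int (mm n t x) * (real r - 1) * real r ^ j" by simp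
    also have "\<dots> = real r ^ n * (mu (Suc j) - mu 0 * ((real r - 1) * real r ^ j)) + mu 0 * real r ^ n * (real r - 1) * real r ^ j"
      by (simp only: cx[OF j] mmr)
    also have "\<dots> = real r ^ n * mu (Suc j)" by (simp add: algebra_simps)
    also have "\<dots> \<ge> 0" using M(2) j R by simp
    finally show "0 \<le> int r ^ n * x j + mm n t x * (int r - 1) * int r ^ j" by linarith
  qed
  thus ?thesis unfolding QS_def using M(1) m0 by blast
qed

lemma ES_QS_2:
  assumes r: "r \<ge> 1" and x: "x \<in> QS r n t"
  shows "x \<in> ES r n t"
proof -
  have Q: "\<forall>j\<ge>n. x j = 0" "0 \<le> mm n t x" "\<forall>j<n. 0 \<le> int r ^ n * x j + mm n t x * (int r - 1) * int r ^ j"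
    using x unfolding QS_def by auto
  have R: "real r ^ n > 0" using r by simp
  define m0 where "m0 = real_of_int (mm n t x) / real r ^ n"
  define mu where "mu = (\<lambda>i. if i = 0 then m0 else real_of_int (x (i - 1)) + m0 * ((real r - 1) * real r ^ (i - 1)))"
  have mu0: "mu 0 = m0" unfolding mu_def by simp
  have muS: "\<And>j. mu (Suc j) = real_of_int (x j) + m0 * ((real r - 1) * real r ^ j)" unfolding mu_def by simp
  have "\<forall>i\<le>n. 0 \<le> mu i"
  proof (intro allI impI)
    fix i assume i: "i \<le> n"
    show "0 \<le> mu i"
    proof (cases i)
      case 0 thus ?thesis using Q(2) R mu0 unfolding m0_def by simp
    next
      case (Suc j)
      have j: "j < n" using i Suc by simp
      have "0 \<le> int r ^ n * x j + mm n t x * (int r - 1) * int r ^ j" using Q(3) j by blast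
      hence "0 \<le> real_of_int (int r ^ n * x j + mm n t x * (int r - 1) * int r ^ j)"
        by (simp only: of_int_0_le_iff)
      also have "real_of_int (int r ^ n * x j + mm n t x * (int r - 1) * int r ^ j) = real r ^ n * mu (Suc j)"
        using R unfolding muS m0_def by (simp add: field_simps)
      finally show ?thesis using R Suc by (simp add: zero_le_mult_iff)
    qed
  qed
  moreover have "(\<Sum>i\<le>n. mu i) = real t"
  proof -
    have "(\<Sum>i\<le>n. mu i) = m0 + (\<Sum>j<n. real_of_int (x j) + m0 * ((real r - 1) * real r ^ j))"
      using sum_shift0[of mu n] mu0 muS by simp
    also have "\<dots> = m0 + (\<Sum>j<n. real_of_int (x j)) + (\<Sum>j<n. m0 * ((real r - 1) * real r ^ j))"
      by (simp add: sum.distrib)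
    also have "(\<Sum>j<n. m0 * ((real r - 1) * real r ^ j)) = m0 * (real r ^ n - 1)"
      by (subst sum_distrib_left[symmetric]) (simp only: geom)
    also have "m0 * real r ^ n = real_of_int (mm n t x)" unfolding m0_def using R by simp
    hence "m0 + (\<Sum>j<n. real_of_int (x j)) + m0 * (real r ^ n - 1) = real_of_int (mm n t x) + (\<Sum>j<n. real_of_int (x j))"
      by (simp add: algebra_simps)
    also have "\<dots> = real t" unfolding mm_def by simp
    finally show ?thesis .
  qed
  moreover have "\<forall>j<n. real_of_int (x j) = (\<Sum>i\<le>n. mu i * base_vert r n i j)"
    using bv_sum mu0 muS by simp
  ultimately show ?thesis unfolding ES_def using Q(1) by blast
qed

lemma ES_QS: "r \<ge> 1 \<Longrightarrow> ES r n t = QS r n t"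
  using ES_QS_1 ES_QS_2 by blast



definition FF :: "nat \<Rightarrow> nat \<Rightarrow> nat \<Rightarrow> nat list \<Rightarrow> nat \<Rightarrow> int" where
  "FF r n b ks = (\<lambda>j. if j < n then int (ks ! Suc j) - int (ks ! 0) * (int r - 1) * int r ^ j - int (fl r n b j) else 0)"

definition DD :: "nat \<Rightarrow> nat \<Rightarrow> nat \<Rightarrow> (nat \<times> nat list) set" where
  "DD r n t = (SIGMA b:{..<r ^ n}. {ks. length ks = Suc n \<and> int (sum_list ks) + hh r n b = int t})"

lemma geomI: "(\<Sum>j<n. (int r - 1) * int r ^ j) = int r ^ n - 1"
  by (induction n) (auto simp: algebra_simps)

lemma flI:
  assumes "r \<ge> 1"
  shows "int b * (int r - 1) * int r ^ j = int (fl r n b j) * int r ^ n + int (fr r n b j)"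
proof -
  have "b * (r - 1) * r ^ j = fl r n b j * r ^ n + fr r n b j"
    unfolding fl_def fr_def by (metis div_mult_mod_eq)
  hence e: "int (b * (r - 1) * r ^ j) = int (fl r n b j) * int r ^ n + int (fr r n b j)"
    by (simp only: of_nat_add of_nat_mult of_nat_power)
  have d: "int (r - 1) = int r - 1" using assms by auto
  have "int (b * (r - 1) * r ^ j) = int b * int (r - 1) * int r ^ j" by (simp only: of_nat_mult of_nat_power)
  thus ?thesis using e d by simp
qed

lemma fr_lt_int: "r \<ge> 1 \<Longrightarrow> int (fr r n b j) < int r ^ n"
proof -
  assume "r \<ge> 1"
  hence "fr r n b j < r ^ n" unfolding fr_def by simp
  thus ?thesis by (metis of_nat_less_iff of_nat_power)
qed

lemma sumlist: "length ks = Suc n \<Longrightarrow> int (sum_list ks) = int (ks ! 0) + (\<Sum>j<n. int (ks ! Suc j))"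
proof -
  assume l: "length ks = Suc n"
  have "sum_list ks = (\<Sum>i=0..<length ks. ks ! i)" by (rule sum_list_sum_nth)
  also have "\<dots> = (\<Sum>i<Suc n. ks ! i)" using l by (simp add: atLeast0LessThan)
  also have "\<dots> = ks ! 0 + (\<Sum>j<n. ks ! Suc j)" by (simp only: sum.lessThan_Suc_shift)
  finally show ?thesis by simp
qed

lemma sumFF: "(\<Sum>j<n. FF r n b ks j) = (\<Sum>j<n. int (ks ! Suc j)) - int (ks ! 0) * (int r ^ n - 1) - (\<Sum>j<n. int (fl r n b j))"
proof -
  have "(\<Sum>j<n. FF r n b ks j) = (\<Sum>j<n. int (ks ! Suc j) - int (ks ! 0) * ((int r - 1) * int r ^ j) - int (fl r n b j))"
    unfolding FF_def by (intro sum.cong) (auto simp: algebra_simps)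
  also have "\<dots> = (\<Sum>j<n. int (ks ! Suc j)) - (\<Sum>j<n. int (ks ! 0) * ((int r - 1) * int r ^ j)) - (\<Sum>j<n. int (fl r n b j))"
    by (simp add: sum_subtractf)
  also have "(\<Sum>j<n. int (ks ! 0) * ((int r - 1) * int r ^ j)) = int (ks ! 0) * (int r ^ n - 1)"
    by (subst sum_distrib_left[symmetric]) (simp only: geomI)
  finally show ?thesis .
qed

lemma mm_FF:
  assumes l: "length ks = Suc n" and s: "int (sum_list ks) + hh r n b = int t"
  shows "mm n t (FF r n b ks) = int (ks ! 0) * int r ^ n + int b"
proof -
  have "int t = int (ks ! 0) + (\<Sum>j<n. int (ks ! Suc j)) + int b - (\<Sum>j<n. int (fl r n b j))"
    using s sumlist[OF l] unfolding hh_def by simp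
  thus ?thesis unfolding mm_def sumFF by (simp add: algebra_simps)
qed

lemma FF_QS:
  assumes r: "r \<ge> 1" and d: "(b, ks) \<in> DD r n t"
  shows "FF r n b ks \<in> QS r n t"
proof -
  have l: "length ks = Suc n" and s: "int (sum_list ks) + hh r n b = int t" using d unfolding DD_def by auto
  have m: "mm n t (FF r n b ks) = int (ks ! 0) * int r ^ n + int b" using mm_FF[OF l s] .
  have "\<forall>j<n. 0 \<le> int r ^ n * FF r n b ks j + mm n t (FF r n b ks) * (int r - 1) * int r ^ j"
  proof (intro allI impI)
    fix j assume j: "j < n"
    have "int r ^ n * FF r n b ks j + mm n t (FF r n b ks) * (int r - 1) * int r ^ j
      = int r ^ n * (int (ks ! Suc j) - int (ks ! 0) * (int r - 1) * int r ^ j - int (fl r n b j))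
        + (int (ks ! 0) * int r ^ n + int b) * (int r - 1) * int r ^ j"
      using j by (simp only: m) (simp add: FF_def)
    also have "\<dots> = int r ^ n * int (ks ! Suc j) - int r ^ n * int (fl r n b j) + int b * (int r - 1) * int r ^ j"
      by (simp add: algebra_simps)
    also have "\<dots> = int r ^ n * int (ks ! Suc j) + int (fr r n b j)"
      using flI[OF r, of b j n] by (simp add: mult.commute)
    also have "\<dots> \<ge> 0" by simp
    finally show "0 \<le> int r ^ n * FF r n b ks j + mm n t (FF r n b ks) * (int r - 1) * int r ^ j" .
  qed
  moreover have "\<forall>j\<ge>n. FF r n b ks j = 0" unfolding FF_def by simp
  ultimately show ?thesis unfolding QS_def by (simp add: m)
qed

lemma FF_inj:
  assumes r: "r \<ge> 1"
  shows "inj_on (\<lambda>(b, ks). FF r n b ks) (DD r n t)"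
proof (rule inj_onI, clarify)
  fix b ks b' ks'
  assume d1: "(b, ks) \<in> DD r n t" and d2: "(b', ks') \<in> DD r n t" and e: "FF r n b ks = FF r n b' ks'"
  have l1: "length ks = Suc n" and s1: "int (sum_list ks) + hh r n b = int t" and b1: "b < r ^ n"
    using d1 unfolding DD_def by auto
  have l2: "length ks' = Suc n" and s2: "int (sum_list ks') + hh r n b' = int t" and b2: "b' < r ^ n"
    using d2 unfolding DD_def by auto
  have "int (ks ! 0) * int r ^ n + int b = int (ks' ! 0) * int r ^ n + int b'"
    using mm_FF[OF l1 s1] mm_FF[OF l2 s2] e by simp
  hence N: "ks ! 0 * r ^ n + b = ks' ! 0 * r ^ n + b'"
    by (metis (mono_tags) of_nat_add of_nat_eq_iff of_nat_mult of_nat_power)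
  have bb: "b = b'"
  proof -
    have "(ks ! 0 * r ^ n + b) mod r ^ n = b" using b1 by simp
    moreover have "(ks' ! 0 * r ^ n + b') mod r ^ n = b'" using b2 by simp
    ultimately show ?thesis using N by simp
  qed
  have k0: "ks ! 0 = ks' ! 0" using N bb r by simp
  have "ks = ks'"
  proof (rule nth_equalityI)
    show "length ks = length ks'" using l1 l2 by simp
    fix i assume i: "i < length ks"
    show "ks ! i = ks' ! i"
    proof (cases i)
      case 0 thus ?thesis using k0 by simp
    next
      case (Suc j)
      hence j: "j < n" using i l1 by simp
      have "FF r n b ks j = FF r n b' ks' j" using e by simp
      hence "int (ks ! Suc j) = int (ks' ! Suc j)" unfolding FF_def using j bb k0 by simp
      thus ?thesis using Suc by simp
    qed
  qed
  thus "b = b' \<and> ks = ks'" using bb by simp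
qed

lemma FF_surj:
  assumes r: "r \<ge> 1" and x: "x \<in> QS r n t"
  shows "x \<in> (\<lambda>(b, ks). FF r n b ks) ` DD r n t"
proof -
  have Q: "\<forall>j\<ge>n. x j = 0" "0 \<le> mm n t x" "\<forall>j<n. 0 \<le> int r ^ n * x j + mm n t x * (int r - 1) * int r ^ j"
    using x unfolding QS_def by auto
  have Rp: "int r ^ n > 0" using r by simp
  define M where "M = nat (mm n t x)"
  define b where "b = M mod r ^ n"
  define k0 where "k0 = M div r ^ n"
  have bR: "b < r ^ n" unfolding b_def using r by simp
  have mM: "mm n t x = int k0 * int r ^ n + int b"
  proof -
    have "M = k0 * r ^ n + b" unfolding k0_def b_def by (metis div_mult_mod_eq)
    hence "int M = int k0 * int r ^ n + int b" by (simp only: of_nat_add of_nat_mult of_nat_power)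
    thus ?thesis using Q(2) unfolding M_def by simp
  qed
  define e where "e = (\<lambda>j. x j + int k0 * (int r - 1) * int r ^ j + int (fl r n b j))"
  have e0: "\<And>j. j < n \<Longrightarrow> 0 \<le> e j"
  proof -
    fix j assume j: "j < n"
    have "0 \<le> int r ^ n * x j + mm n t x * (int r - 1) * int r ^ j" using Q(3) j by blast
    also have "int r ^ n * x j + mm n t x * (int r - 1) * int r ^ j
        = int r ^ n * x j + int k0 * int r ^ n * (int r - 1) * int r ^ j + int b * (int r - 1) * int r ^ j"
      unfolding mM by (simp add: algebra_simps)
    also have "\<dots> = int r ^ n * e j + int (fr r n b j)"
      unfolding flI[OF r, of b j n] e_def by (simp add: algebra_simps)
    finally have "0 \<le> int r ^ n * e j + int (fr r n b j)" .
    moreover have "int (fr r n b j) < int r ^ n" using fr_lt_int[OF r, of n b j] .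
    moreover have "int r ^ n * (e j + 1) = int r ^ n * e j + int r ^ n" by (simp add: algebra_simps)
    ultimately have "0 < int r ^ n * (e j + 1)" by linarith
    hence "0 < e j + 1" using Rp zero_less_mult_pos by blast
    thus "0 \<le> e j" by simp
  qed
  define ks where "ks = map (\<lambda>i. if i = 0 then k0 else nat (e (i - 1))) [0..<Suc n]"
  have l: "length ks = Suc n" unfolding ks_def by simp
  have ks0: "ks ! 0 = k0" unfolding ks_def by (simp del: upt_Suc)
  have ksS: "\<And>j. j < n \<Longrightarrow> int (ks ! Suc j) = e j"
  proof -
    fix j assume j: "j < n"
    have "ks ! Suc j = nat (e j)" unfolding ks_def using j by (simp del: upt_Suc)
    thus "int (ks ! Suc j) = e j" using e0[OF j] by simp
  qed
  have FFx: "FF r n b ks = x"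
  proof
    fix j show "FF r n b ks j = x j"
    proof (cases "j < n")
      case True thus ?thesis unfolding FF_def using ksS[OF True] ks0 by (simp add: e_def)
    next
      case False thus ?thesis unfolding FF_def using Q(1) by simp
    qed
  qed
  have s: "int (sum_list ks) + hh r n b = int t"
  proof -
    have "int (sum_list ks) = int k0 + (\<Sum>j<n. e j)" using sumlist[OF l] ks0 ksS by simp
    also have "(\<Sum>j<n. e j) = (\<Sum>j<n. x j) + (\<Sum>j<n. int k0 * ((int r - 1) * int r ^ j)) + (\<Sum>j<n. int (fl r n b j))"
    proof -
      have "(\<Sum>j<n. e j) = (\<Sum>j<n. x j + int k0 * ((int r - 1) * int r ^ j) + int (fl r n b j))"
        unfolding e_def by (intro sum.cong) (auto simp: algebra_simps)
      thus ?thesis by (simp only: sum.distrib)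
    qed
    also have "(\<Sum>j<n. int k0 * ((int r - 1) * int r ^ j)) = int k0 * (int r ^ n - 1)"
      by (subst sum_distrib_left[symmetric]) (simp only: geomI)
    finally have "int (sum_list ks) = int k0 + (\<Sum>j<n. x j) + int k0 * (int r ^ n - 1) + (\<Sum>j<n. int (fl r n b j))"
      by simp
    moreover have "int t = int k0 * int r ^ n + int b + (\<Sum>j<n. x j)" using mM unfolding mm_def by simp
    ultimately show ?thesis unfolding hh_def by (simp add: algebra_simps)
  qed
  have "(b, ks) \<in> DD r n t" unfolding DD_def using bR l s by simp
  thus ?thesis using FFx by force
qed

lemma card_QS:
  assumes r: "r \<ge> 1"
  shows "card (QS r n t) = card (DD r n t)"
proof -
  have "(\<lambda>(b, ks). FF r n b ks) ` DD r n t = QS r n t"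
    using FF_surj[OF r] FF_QS[OF r] by auto
  thus ?thesis using card_image[OF FF_inj[OF r, of n t]] by simp
qed



definition hn :: "nat \<Rightarrow> nat \<Rightarrow> nat \<Rightarrow> nat" where "hn r n b = nat (hh r n b)"

lemma hn_eq: "r \<ge> 1 \<Longrightarrow> int (hn r n b) = hh r n b"
  unfolding hn_def using hh_nonneg by simp

lemma fib_card:
  assumes r: "r \<ge> 1"
  shows "card {ks. length ks = Suc n \<and> int (sum_list ks) + hh r n b = int t}
       = (if hn r n b \<le> t then (t - hn r n b + n) choose (t - hn r n b) else 0)"
proof (cases "hn r n b \<le> t")
  case True
  have "{ks. length ks = Suc n \<and> int (sum_list ks) + hh r n b = int t}
      = {ks. length ks = Suc n \<and> sum_list ks = t - hn r n b}"
    using hn_eq[OF r, of n b] True by auto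
  moreover have "card {ks :: nat list. size ks = Suc n \<and> sum_list ks = t - hn r n b} = (t - hn r n b + Suc n - 1) choose (t - hn r n b)"
    by (rule card_length_sum_list)
  ultimately show ?thesis using True by simp
next
  case False
  have E: "{ks. length ks = Suc n \<and> int (sum_list ks) + hh r n b = int t} = {}"
    using hn_eq[OF r, of n b] False by auto
  show ?thesis unfolding E using False by simp
qed

lemma fib_finite:
  assumes r: "r \<ge> 1"
  shows "finite {ks. length ks = Suc n \<and> int (sum_list ks) + hh r n b = int t}"
proof (cases "hn r n b \<le> t")
  case True
  hence "card {ks. length ks = Suc n \<and> int (sum_list ks) + hh r n b = int t} > 0"
    using fib_card[OF r] by simp
  thus ?thesis using card_ge_0_finite by blast
next
  case False
  have E: "{ks. length ks = Suc n \<and> int (sum_list ks) + hh r n b = int t} = {}"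
    using hn_eq[OF r, of n b] False by auto
  show ?thesis unfolding E by simp
qed

lemma ehr_formula:
  assumes r: "r \<ge> 1"
  shows "ehrhart_count n n (base_vert r n) t
     = (\<Sum>b<r ^ n. if hn r n b \<le> t then (t - hn r n b + n) choose (t - hn r n b) else 0)"
proof -
  have "ehrhart_count n n (base_vert r n) t = card (DD r n t)"
    using ehr_ES ES_QS[OF r] card_QS[OF r] by simp
  also have "\<dots> = (\<Sum>b<r ^ n. card {ks. length ks = Suc n \<and> int (sum_list ks) + hh r n b = int t})"
    unfolding DD_def using fib_finite[OF r] by (subst card_SigmaI) auto
  also have "\<dots> = (\<Sum>b<r ^ n. if hn r n b \<le> t then (t - hn r n b + n) choose (t - hn r n b) else 0)"
    using fib_card[OF r] by simp
  finally show ?thesis .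
qed

definition GG :: "nat \<Rightarrow> int fps" where "GG n = Abs_fps (\<lambda>t. int ((t + n) choose t))"

lemma mult_1mX_nth: "fps_nth (f * (1 - fps_X)) k = (if k = 0 then fps_nth f 0 else fps_nth f k - fps_nth f (k - 1))"
  for f :: "int fps"
proof -
  have "f * (1 - fps_X) = f - fps_X * f" by (simp add: algebra_simps)
  thus ?thesis by simp
qed

lemma GG_step: "GG (Suc n) * (1 - fps_X) = GG n"
proof (rule fps_ext)
  fix k
  show "fps_nth (GG (Suc n) * (1 - fps_X)) k = fps_nth (GG n) k"
  proof (cases k)
    case 0 thus ?thesis unfolding mult_1mX_nth by (simp add: GG_def)
  next
    case (Suc s)
    have "(Suc s + Suc n) choose Suc s = (s + Suc n choose s) + (Suc s + n choose Suc s)"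
      by simp
    thus ?thesis unfolding mult_1mX_nth using Suc by (simp add: GG_def)
  qed
qed

lemma GG_inv: "GG n * (1 - fps_X) ^ Suc n = 1"
proof (induction n)
  case 0
  show ?case
  proof (rule fps_ext)
    fix k show "fps_nth (GG 0 * (1 - fps_X) ^ Suc 0) k = fps_nth (1 :: int fps) k"
      using mult_1mX_nth[of "GG 0" k] by (simp add: GG_def)
  qed
next
  case (Suc n)
  have "GG (Suc n) * (1 - fps_X) ^ Suc (Suc n) = (GG (Suc n) * (1 - fps_X)) * (1 - fps_X) ^ Suc n"
    by (simp only: power_Suc mult_ac)
  also have "\<dots> = 1" using GG_step Suc by simp
  finally show ?case .
qed

lemma count_fps:
  assumes r: "r \<ge> 1"
  shows "Abs_fps (\<lambda>t. int (ehrhart_count n n (base_vert r n) t)) = (\<Sum>b<r ^ n. fps_X ^ hn r n b) * GG n"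
proof (rule fps_ext)
  fix t
  have "fps_nth ((\<Sum>b<r ^ n. fps_X ^ hn r n b) * GG n) t = (\<Sum>b<r ^ n. fps_nth (fps_X ^ hn r n b * GG n) t)"
    by (simp add: sum_distrib_right fps_sum_nth)
  also have "\<dots> = (\<Sum>b<r ^ n. int (if hn r n b \<le> t then (t - hn r n b + n) choose (t - hn r n b) else 0))"
    by (intro sum.cong) (auto simp: fps_X_power_mult_nth GG_def)
  also have "\<dots> = int (ehrhart_count n n (base_vert r n) t)"
    unfolding ehr_formula[OF r] by (simp only: of_nat_sum)
  finally show "fps_nth (Abs_fps (\<lambda>t. int (ehrhart_count n n (base_vert r n) t))) t
      = fps_nth ((\<Sum>b<r ^ n. fps_X ^ hn r n b) * GG n) t" by simp
qed

lemma hstar_formula: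
  assumes r: "r \<ge> 1"
  shows "h_star n n (base_vert r n) = (\<Sum>b<r ^ n. fps_X ^ hn r n b)"
proof -
  have "h_star n n (base_vert r n) = (\<Sum>b<r ^ n. fps_X ^ hn r n b) * (GG n * (1 - fps_X) ^ Suc n)"
    unfolding h_star_def count_fps[OF r] by (simp add: mult.assoc)
  thus ?thesis using GG_inv by simp
qed

lemma sumX_nth:
  assumes "finite A"
  shows "fps_nth (\<Sum>b\<in>A. (fps_X :: int fps) ^ f b) k = int (card {b \<in> A. f b = k})"
proof -
  have "fps_nth (\<Sum>b\<in>A. (fps_X :: int fps) ^ f b) k = (\<Sum>b\<in>A. of_bool (f b = k))"
    by (simp add: fps_sum_nth eq_commute of_bool_def)
  also have "\<dots> = int (card (A \<inter> {b. f b = k}))" using assms by simp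
  finally show ?thesis by (simp add: Int_def conj_commute)
qed



lemma fl_mult_lt:
  assumes r: "r \<ge> 1" and j: "j < m"
  shows "fl r (Suc m) (r * b) j = fl r m b j"
proof -
  have "r * b * (r - 1) * r ^ j = r * (b * (r - 1) * r ^ j)" by (simp add: mult_ac)
  moreover have "r ^ Suc m = r * r ^ m" by simp
  ultimately show ?thesis unfolding fl_def using r by (simp only:) (rule div_mult_mult1, simp)
qed

lemma fl_mult_last:
  assumes r: "r \<ge> 1"
  shows "fl r (Suc m) (r * b) m = b * (r - 1)"
proof -
  have "r * b * (r - 1) * r ^ m = r ^ Suc m * (b * (r - 1))" by (simp add: mult_ac)
  thus ?thesis unfolding fl_def using r by simp
qed

lemma hh_mult:
  assumes r: "r \<ge> 1"
  shows "hh r (Suc m) (r * b) = hh r m b"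
proof -
  have "(\<Sum>j<Suc m. int (fl r (Suc m) (r * b) j)) = (\<Sum>j<m. int (fl r (Suc m) (r * b) j)) + int (b * (r - 1))"
    using fl_mult_last[OF r] by simp
  also have "(\<Sum>j<m. int (fl r (Suc m) (r * b) j)) = (\<Sum>j<m. int (fl r m b j))"
    using fl_mult_lt[OF r] by simp
  finally have s: "(\<Sum>j<Suc m. int (fl r (Suc m) (r * b) j)) = (\<Sum>j<m. int (fl r m b j)) + int (b * (r - 1))" .
  have "int (r * b) = int b + int (b * (r - 1))" using r by (simp add: algebra_simps of_nat_diff)
  thus ?thesis unfolding hh_def s by simp
qed

lemma dvd_set:
  assumes r: "r \<ge> 1"
  shows "{b \<in> {..<r ^ Suc m}. r dvd b \<and> hh r (Suc m) b = int k} = (\<lambda>b. r * b) ` {b \<in> {..<r ^ m}. hh r m b = int k}"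
proof
  show "{b \<in> {..<r ^ Suc m}. r dvd b \<and> hh r (Suc m) b = int k} \<subseteq> (\<lambda>b. r * b) ` {b \<in> {..<r ^ m}. hh r m b = int k}"
  proof
    fix b assume "b \<in> {b \<in> {..<r ^ Suc m}. r dvd b \<and> hh r (Suc m) b = int k}"
    then obtain c where b: "b = r * c" "r * c < r * r ^ m" "hh r (Suc m) (r * c) = int k" by auto
    have "c < r ^ m" using b(2) by simp
    moreover have "hh r m c = int k" using b(3) hh_mult[OF r] by simp
    ultimately show "b \<in> (\<lambda>b. r * b) ` {b \<in> {..<r ^ m}. hh r m b = int k}" using b(1) by blast
  qed
  show "(\<lambda>b. r * b) ` {b \<in> {..<r ^ m}. hh r m b = int k} \<subseteq> {b \<in> {..<r ^ Suc m}. r dvd b \<and> hh r (Suc m) b = int k}"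
    using hh_mult[OF r] r by auto
qed

lemma card_dvd_set:
  assumes r: "r \<ge> 1"
  shows "card {b \<in> {..<r ^ Suc m}. r dvd b \<and> hh r (Suc m) b = int k} = card {b \<in> {..<r ^ m}. hh r m b = int k}"
proof -
  have "inj_on (\<lambda>b. r * b) {b \<in> {..<r ^ m}. hh r m b = int k}" using r by (auto intro: inj_onI)
  thus ?thesis unfolding dvd_set[OF r] by (rule card_image)
qed

lemma hn_k: "r \<ge> 1 \<Longrightarrow> (hn r n b = k) = (hh r n b = int k)"
  using hn_eq[of r n b] by auto

lemma hstar_nth:
  assumes r: "r \<ge> 1"
  shows "fps_nth (h_star n n (base_vert r n)) k = int (card {b \<in> {..<r ^ n}. hh r n b = int k})"
  unfolding hstar_formula[OF r] sumX_nth[OF finite_lessThan] using hn_k[OF r] by simp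



theorem mainTheorem6:
  fixes r n :: nat
  assumes "r \<ge> 2" and "n \<ge> 2"
  shows "(\<forall>b::nat. 0 < b \<and> b < r ^ n \<longrightarrow>
            base_hp_points r n b \<noteq> {} \<and>
            (\<forall>y \<in> base_hp_points r n b.
               (y \<in> open_par n n (base_vert r n) \<longleftrightarrow> \<not> r dvd b)))
       \<and> lstar n n (base_vert r n) =
           h_star n n (base_vert r n) - h_star (n - 1) (n - 1) (base_vert r (n - 1))"
proof
  have r1: "r \<ge> 1" using assms by simp
  have n1: "n \<ge> 1" using assms by simp
  show "\<forall>b::nat. 0 < b \<and> b < r ^ n \<longrightarrow>
            base_hp_points r n b \<noteq> {} \<and>
            (\<forall>y \<in> base_hp_points r n b.
               (y \<in> open_par n n (base_vert r n) \<longleftrightarrow> \<not> r dvd b))"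
    using partA[OF assms(1) n1] by blast
  obtain m where m: "n = Suc m" using n1 by (cases n) auto
  show "lstar n n (base_vert r n) =
           h_star n n (base_vert r n) - h_star (n - 1) (n - 1) (base_vert r (n - 1))"
  proof (rule fps_ext)
    fix k
    let ?A = "{b \<in> {..<r ^ n}. hh r n b = int k}"
    let ?A1 = "{b \<in> {..<r ^ n}. r dvd b \<and> hh r n b = int k}"
    let ?A2 = "{b. b < r ^ n \<and> \<not> r dvd b \<and> hh r n b = int k}"
    have "?A = ?A1 \<union> ?A2" by auto
    moreover have "?A1 \<inter> ?A2 = {}" by auto
    ultimately have cA: "card ?A = card ?A1 + card ?A2" by (simp add: card_Un_disjoint)
    have c1: "card ?A1 = card {b \<in> {..<r ^ (n - 1)}. hh r (n - 1) b = int k}"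
      using card_dvd_set[OF r1, of m k] m by simp
    show "fps_nth (lstar n n (base_vert r n)) k =
      fps_nth (h_star n n (base_vert r n) - h_star (n - 1) (n - 1) (base_vert r (n - 1))) k"
      using lstar_coeff[OF assms(1) n1, of k] hstar_nth[OF r1, of n k] hstar_nth[OF r1, of "n - 1" k] cA c1
      by simp
  qed
qed


end
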